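(* Let $C$ be a Reedy category and let $([n],X)$ be an object of $\int N^{-,+}(C)$. The following are equivalent: (1) $([n],X)$ is an object of $\int N^{--,+}_+(C)$, i.e. $X$ reflects identities; (2) $\mathrm{id}_{([n],X)}$ is maximal in $\mathrm{Hom}_{\int N^{-,+}(C)}(([n],X),([n],X))$; (3) $\mathrm{id}_{([n],X)}$ is minimal in this hom-poset; (4) $\mathrm{id}_{([n],X)}$ is the largest element of its equivalence class; (5) the equivalence class of $\mathrm{id}_{([n],X)}$ is a singleton.
   Context: A Reedy category $(C,C_-,C_+)$: wide subcategories with unique factorization of every morphism as ($C_-$ then $C_+$), membership in $C_\pm$ decidable, and the relation ($x<'y$ iff non-identity $x\to y$ in $C_+$ or non-identity $y\to x$ in $C_-$) well-founded. $\Delta$: finite ordinals $[n]$ and order-preserving maps. $\int N^{-,+}(C)$: objects $([n],X)$ with $X\colon[n]\to C$ a functor sending all morphisms into $C_-$; morphisms $([m],X)\to([n],Y)$ are $(\alpha,\theta)$ with $\alpha\colon[m]\to[n]$ in $\Delta$ and $\theta\colon X\Rightarrow Y\circ\alpha$ with all components in $C_+$; composition $(\beta,\varphi)\circ(\alpha,\theta)=(\beta\alpha,(\varphi\alpha)\circ\theta)$. $\int N^{--,+}_+(C)$: subcategory on objects whose $X$ reflects identities ($X(i\le j)$ an identity implies $i=j$) and morphisms with $\alpha$ injective. Order on hom-sets: $(\alpha,\theta)\le(\alpha',\theta')$ iff $\alpha\le\alpha'$ pointwise and $\theta'_i=Y(\alpha(i)\le\alpha'(i))\circ\theta_i$ for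 all $i$; equivalence is the equivalence relation generated by $\le$. *)

theory Defs
  imports Main "HOL-Library.FuncSet"
begin

record ('o, 'm) cat =
  Obj  :: "'o set"
  Arr  :: "'m set"
  Dom  :: "'m \<Rightarrow> 'o"
  Cod  :: "'m \<Rightarrow> 'o"
  Id   :: "'o \<Rightarrow> 'm"
  Comp :: "'m \<Rightarrow> 'm \<Rightarrow> 'm"   (* Comp C g f = g \<circ> f *)

definition category :: "('o, 'm) cat \<Rightarrow> bool" where
  "category C \<longleftrightarrow>
     (\<forall>x\<in>Obj C. Id C x \<in> Arr C \<and> Dom C (Id C x) = x \<and> Cod C (Id C x) = x) \<and>
     (\<forall>f\<in>Arr C. Dom C f \<in> Obj C \<and> Cod C f \<in> Obj C) \<and>
     (\<forall>f\<in>Arr C. \<forall>g\<in>Arr C. Cod C f = Dom C g \<longrightarrow>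
         Comp C g f \<in> Arr C \<and> Dom C (Comp C g f) = Dom C f \<and> Cod C (Comp C g f) = Cod C g) \<and>
     (\<forall>f\<in>Arr C. Comp C f (Id C (Dom C f)) = f \<and> Comp C (Id C (Cod C f)) f = f) \<and>
     (\<forall>f\<in>Arr C. \<forall>g\<in>Arr C. \<forall>h\<in>Arr C. Cod C f = Dom C g \<and> Cod C g = Dom C h \<longrightarrow>
         Comp C h (Comp C g f) = Comp C (Comp C h g) f)"

definition wide_subcat :: "('o, 'm) cat \<Rightarrow> 'm set \<Rightarrow> bool" where
  "wide_subcat C S \<longleftrightarrow> S \<subseteq> Arr C \<and> (\<forall>x\<in>Obj C. Id C x \<in> S) \<and>
     (\<forall>f\<in>S. \<forall>g\<in>S. Cod C f = Dom C g \<longrightarrow> Comp C g f \<in> S)"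

text \<open>The relation x <' y of a Reedy structure (pairs (x,y) with x <' y).\<close>
definition reedy_rel :: "('o, 'm) cat \<Rightarrow> 'm set \<Rightarrow> 'm set \<Rightarrow> ('o \<times> 'o) set" where
  "reedy_rel C Cm Cp = {(x, y). x \<in> Obj C \<and> y \<in> Obj C \<and>
      ((\<exists>f\<in>Cp. Dom C f = x \<and> Cod C f = y \<and> f \<noteq> Id C x) \<or>
       (\<exists>f\<in>Cm. Dom C f = y \<and> Cod C f = x \<and> f \<noteq> Id C y))}"

text \<open>Reedy category (C, C_-, C_+). Decidability of membership is automatic in HOL.\<close>
definition reedy :: "('o, 'm) cat \<Rightarrow> 'm set \<Rightarrow> 'm set \<Rightarrow> bool" where
  "reedy C Cm Cp \<longleftrightarrow> category C \<and> wide_subcat C Cm \<and> wide_subcat C Cp \<and>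
     (\<forall>f\<in>Arr C. \<exists>!gh. fst gh \<in> Cm \<and> snd gh \<in> Cp \<and> Cod C (fst gh) = Dom C (snd gh) \<and>
                      Comp C (snd gh) (fst gh) = f) \<and>
     wf (reedy_rel C Cm Cp)"

text \<open>An object ([n],X): X is given by its object part Xo (on 0..n) and its
  morphism part Xm i j = X(i \<le> j) for i \<le> j \<le> n.\<close>
definition nerve_obj :: "('o, 'm) cat \<Rightarrow> 'm set \<Rightarrow> nat \<Rightarrow> (nat \<Rightarrow> 'o) \<Rightarrow> (nat \<Rightarrow> nat \<Rightarrow> 'm) \<Rightarrow> bool" where
  "nerve_obj C Cm n Xo Xm \<longleftrightarrow>
     (\<forall>i\<le>n. Xo i \<in> Obj C) \<and>
     (\<forall>i j. i \<le> j \<and> j \<le> n \<longrightarrow>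
        Xm i j \<in> Arr C \<and> Dom C (Xm i j) = Xo i \<and> Cod C (Xm i j) = Xo j \<and> Xm i j \<in> Cm) \<and>
     (\<forall>i\<le>n. Xm i i = Id C (Xo i)) \<and>
     (\<forall>i j k. i \<le> j \<and> j \<le> k \<and> k \<le> n \<longrightarrow> Comp C (Xm j k) (Xm i j) = Xm i k)"

definition reflects_identities :: "('o, 'm) cat \<Rightarrow> nat \<Rightarrow> (nat \<Rightarrow> 'o) \<Rightarrow> (nat \<Rightarrow> nat \<Rightarrow> 'm) \<Rightarrow> bool" where
  "reflects_identities C n Xo Xm \<longleftrightarrow>
     (\<forall>i j. i \<le> j \<and> j \<le> n \<and> Xm i j = Id C (Xo i) \<longrightarrow> i = j)"

definition nerve_hom :: "('o, 'm) cat \<Rightarrow> 'm set \<Rightarrow>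
    nat \<Rightarrow> (nat \<Rightarrow> 'o) \<Rightarrow> (nat \<Rightarrow> nat \<Rightarrow> 'm) \<Rightarrow>
    nat \<Rightarrow> (nat \<Rightarrow> 'o) \<Rightarrow> (nat \<Rightarrow> nat \<Rightarrow> 'm) \<Rightarrow> ((nat \<Rightarrow> nat) \<times> (nat \<Rightarrow> 'm)) set" where
  "nerve_hom C Cp m Xo Xm n Yo Ym = {(\<alpha>, \<theta>).
     \<alpha> \<in> extensional {..m} \<and> \<theta> \<in> extensional {..m} \<and>
     (\<forall>i\<le>m. \<alpha> i \<le> n) \<and>
     (\<forall>i j. i \<le> j \<and> j \<le> m \<longrightarrow> \<alpha> i \<le> \<alpha> j) \<and>
     (\<forall>i\<le>m. \<theta> i \<in> Arr C \<and> \<theta> i \<in> Cp \<and> Dom C (\<theta> i) = Xo i \<and> Cod C (\<theta> i) = Yo (\<alpha> i)) \<and>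
     (\<forall>i j. i \<le> j \<and> j \<le> m \<longrightarrow> Comp C (Ym (\<alpha> i) (\<alpha> j)) (\<theta> i) = Comp C (\<theta> j) (Xm i j))}"

definition nerve_id :: "('o, 'm) cat \<Rightarrow> nat \<Rightarrow> (nat \<Rightarrow> 'o) \<Rightarrow> (nat \<Rightarrow> nat) \<times> (nat \<Rightarrow> 'm)" where
  "nerve_id C n Xo = ((\<lambda>i\<in>{..n}. i), (\<lambda>i\<in>{..n}. Id C (Xo i)))"

definition nerve_le :: "('o, 'm) cat \<Rightarrow> nat \<Rightarrow> (nat \<Rightarrow> nat \<Rightarrow> 'm) \<Rightarrow>
    (nat \<Rightarrow> nat) \<times> (nat \<Rightarrow> 'm) \<Rightarrow> (nat \<Rightarrow> nat) \<times> (nat \<Rightarrow> 'm) \<Rightarrow> bool" where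
  "nerve_le C m Ym f g \<longleftrightarrow>
     (\<forall>i\<le>m. fst f i \<le> fst g i \<and> snd g i = Comp C (Ym (fst f i) (fst g i)) (snd f i))"

definition equiv_class_gen :: "'a set \<Rightarrow> ('a \<Rightarrow> 'a \<Rightarrow> bool) \<Rightarrow> 'a \<Rightarrow> 'a set" where
  "equiv_class_gen H le f =
     (let R = {(a, b). a \<in> H \<and> b \<in> H \<and> le a b} in {g \<in> H. (f, g) \<in> (R \<union> R\<inverse>)\<^sup>*})"

end

theory Submission
  imports Defs
begin

context
  fixes C :: "('o, 'm) cat" and Cm Cp :: "'m set"
    and n :: nat and Xo :: "nat \<Rightarrow> 'o" and Xm :: "nat \<Rightarrow> nat \<Rightarrow> 'm"
  assumes R: "reedy C Cm Cp" and N: "nerve_obj C Cm n Xo Xm"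
begin

lemma cat: "category C" using R by (simp add: reedy_def)

lemma id_arr: "x \<in> Obj C \<Longrightarrow> Id C x \<in> Arr C \<and> Dom C (Id C x) = x \<and> Cod C (Id C x) = x"
  using cat by (simp add: category_def)
lemma dc_obj: "f \<in> Arr C \<Longrightarrow> Dom C f \<in> Obj C \<and> Cod C f \<in> Obj C"
  using cat by (simp add: category_def)
lemma comp_arr: "f \<in> Arr C \<Longrightarrow> g \<in> Arr C \<Longrightarrow> Cod C f = Dom C g \<Longrightarrow>
   Comp C g f \<in> Arr C \<and> Dom C (Comp C g f) = Dom C f \<and> Cod C (Comp C g f) = Cod C g"
  using cat by (simp add: category_def)
lemma comp_idr: "f \<in> Arr C \<Longrightarrow> Dom C f = x \<Longrightarrow> Comp C f (Id C x) = f"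
  using cat by (auto simp add: category_def)
lemma comp_idl: "f \<in> Arr C \<Longrightarrow> Cod C f = x \<Longrightarrow> Comp C (Id C x) f = f"
  using cat by (auto simp add: category_def)

lemma Cm_arr: "f \<in> Cm \<Longrightarrow> f \<in> Arr C" using R by (auto simp: reedy_def wide_subcat_def)
lemma Cp_arr: "f \<in> Cp \<Longrightarrow> f \<in> Arr C" using R by (auto simp: reedy_def wide_subcat_def)
lemma Id_Cm: "x \<in> Obj C \<Longrightarrow> Id C x \<in> Cm" using R by (auto simp: reedy_def wide_subcat_def)
lemma Id_Cp: "x \<in> Obj C \<Longrightarrow> Id C x \<in> Cp" using R by (auto simp: reedy_def wide_subcat_def)

lemma fact_unique:
  assumes "f \<in> Arr C" "a \<in> Cm" "b \<in> Cp" "Cod C a = Dom C b" "Comp C b a = f"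
    "a' \<in> Cm" "b' \<in> Cp" "Cod C a' = Dom C b'" "Comp C b' a' = f"
  shows "a = a' \<and> b = b'"
proof -
  from R assms(1) have "\<exists>!gh. fst gh \<in> Cm \<and> snd gh \<in> Cp \<and> Cod C (fst gh) = Dom C (snd gh) \<and>
                      Comp C (snd gh) (fst gh) = f" by (simp add: reedy_def)
  then have "(a,b) = (a',b')" using assms by (metis fst_conv snd_conv)
  then show ?thesis by simp
qed

lemma cmcp_id: assumes "f \<in> Cm" "f \<in> Cp" shows "f = Id C (Dom C f)"
proof -
  have f: "f \<in> Arr C" using assms Cm_arr by blast
  then have o: "Dom C f \<in> Obj C" "Cod C f \<in> Obj C" using dc_obj by auto
  show ?thesis
    using fact_unique[OF f assms(1) Id_Cp[OF o(2)] _ _ Id_Cm[OF o(1)] assms(2)]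
      id_arr[OF o(1)] id_arr[OF o(2)] comp_idl[OF f] comp_idr[OF f] by auto
qed

lemma retract_id: assumes "f \<in> Cm" "g \<in> Cp" "Cod C f = Dom C g" "Comp C g f = Id C (Dom C f)"
  shows "f = Id C (Dom C f)"
proof -
  have f: "f \<in> Arr C" using assms Cm_arr by blast
  have g: "g \<in> Arr C" using assms Cp_arr by blast
  then have o: "Dom C f \<in> Obj C" using dc_obj f by auto
  have i: "Id C (Dom C f) \<in> Arr C" using id_arr[OF o] by auto
  show ?thesis
    using fact_unique[OF i assms(1) assms(2) assms(3) assms(4) Id_Cm[OF o] Id_Cp[OF o]]
      id_arr[OF o] comp_idl[OF i] by auto
qed

lemma Xo_obj: "i \<le> n \<Longrightarrow> Xo i \<in> Obj C" using N by (simp add: nerve_obj_def)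
lemma Xm_props: "i \<le> j \<Longrightarrow> j \<le> n \<Longrightarrow> Xm i j \<in> Arr C \<and> Dom C (Xm i j) = Xo i \<and> Cod C (Xm i j) = Xo j \<and> Xm i j \<in> Cm"
  using N by (simp add: nerve_obj_def)
lemma Xm_id: "i \<le> n \<Longrightarrow> Xm i i = Id C (Xo i)" using N by (simp add: nerve_obj_def)
lemma Xm_comp: "i \<le> j \<Longrightarrow> j \<le> k \<Longrightarrow> k \<le> n \<Longrightarrow> Comp C (Xm j k) (Xm i j) = Xm i k"
  using N by (simp add: nerve_obj_def)

lemma adjacent:
  assumes "i < j" "j \<le> n" "Xm i j = Id C (Xo i)"
  shows "Xm i (Suc i) = Id C (Xo i)"
proof -
  let ?k = "Suc i"
  have c: "Comp C (Xm ?k j) (Xm i ?k) = Id C (Xo i)" using Xm_comp[of i ?k j] assms by simp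
  have pik: "Xm i ?k \<in> Arr C \<and> Dom C (Xm i ?k) = Xo i \<and> Cod C (Xm i ?k) = Xo ?k \<and> Xm i ?k \<in> Cm"
    using Xm_props[of i ?k] assms by simp
  have pkj: "Xm ?k j \<in> Arr C \<and> Dom C (Xm ?k j) = Xo ?k \<and> Cod C (Xm ?k j) = Xo j \<and> Xm ?k j \<in> Cm"
    using Xm_props[of ?k j] assms by simp
  have xj: "Xo j = Xo i" using Xm_props[of i j] assms id_arr[OF Xo_obj[of i]] by auto
  have oi: "Xo i \<in> Obj C" "Xo ?k \<in> Obj C" using Xo_obj assms by auto
  have wf: "wf (reedy_rel C Cm Cp)" using R by (simp add: reedy_def)
  show ?thesis
  proof (rule ccontr)
    assume ne: "Xm i ?k \<noteq> Id C (Xo i)"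
    have "Xm ?k j \<noteq> Id C (Xo ?k)"
    proof
      assume "Xm ?k j = Id C (Xo ?k)"
      then have "Xm i ?k = Id C (Xo i)" using c comp_idl[of "Xm i ?k" "Xo ?k"] pik by simp
      then show False using ne by simp
    qed
    then have r1: "(Xo i, Xo ?k) \<in> reedy_rel C Cm Cp"
      unfolding reedy_rel_def using pkj xj oi by (simp, intro disjI2 bexI[of _ "Xm ?k j"]) auto
    have r2: "(Xo ?k, Xo i) \<in> reedy_rel C Cm Cp"
      unfolding reedy_rel_def using pik ne oi by (simp, intro disjI2 bexI[of _ "Xm i ?k"]) auto
    show False using wf_not_sym[OF wf r1] r2 by simp
  qed
qed


abbreviation "HH \<equiv> nerve_hom C Cp n Xo Xm n Xo Xm"
abbreviation "ee \<equiv> nerve_id C n Xo"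
abbreviation "lle \<equiv> nerve_le C n Xm"

lemma e_in_H: "ee \<in> HH"
proof -
  have "Comp C (Xm i j) (Id C (Xo i)) = Comp C (Id C (Xo j)) (Xm i j)" if "i \<le> j" "j \<le> n" for i j
    using Xm_props[OF that] comp_idl comp_idr by auto
  then show ?thesis unfolding nerve_hom_def nerve_id_def
    using Xo_obj id_arr Id_Cp by auto
qed

lemma fst_e: "i \<le> n \<Longrightarrow> fst ee i = i" by (simp add: nerve_id_def)
lemma snd_e: "i \<le> n \<Longrightarrow> snd ee i = Id C (Xo i)" by (simp add: nerve_id_def)

lemma eq_e: assumes "f \<in> HH" "\<And>i. i \<le> n \<Longrightarrow> fst f i = i" "\<And>i. i \<le> n \<Longrightarrow> snd f i = Id C (Xo i)"
  shows "f = ee"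
proof -
  obtain a t where f: "f = (a, t)" by (cases f)
  have ea: "a \<in> extensional {..n}" "t \<in> extensional {..n}" using assms(1) f by (auto simp: nerve_hom_def)
  have "a x = x" if "x \<le> n" for x using assms(2)[OF that] f by simp
  then have "a = fst ee" by (intro extensionalityI[OF ea(1)]) (auto simp: nerve_id_def)
  have "t x = Id C (Xo x)" if "x \<le> n" for x using assms(3)[OF that] f by simp
  then have "t = snd ee" by (intro extensionalityI[OF ea(2)]) (auto simp: nerve_id_def)
  show ?thesis using f \<open>a = fst ee\<close> \<open>t = snd ee\<close> by (simp add: prod_eq_iff)
qed

lemma le_ee: "lle ee ee"
  unfolding nerve_le_def using fst_e snd_e Xm_id comp_idl id_arr Xo_obj by auto

lemma collapse_in_H:
  assumes g1: "\<And>k. k \<le> n \<Longrightarrow> \<gamma> k \<le> n"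
    and g2: "\<And>a b. a \<le> b \<Longrightarrow> b \<le> n \<Longrightarrow> \<gamma> a \<le> \<gamma> b"
    and g3: "\<And>k. k \<le> n \<Longrightarrow> Xo (\<gamma> k) = Xo k"
    and g4: "\<And>a b. a \<le> b \<Longrightarrow> b \<le> n \<Longrightarrow> Xm (\<gamma> a) (\<gamma> b) = Xm a b"
  shows "(restrict \<gamma> {..n}, snd ee) \<in> HH"
proof -
  have "Comp C (Xm (\<gamma> i) (\<gamma> j)) (Id C (Xo i)) = Comp C (Id C (Xo j)) (Xm i j)" if "i \<le> j" "j \<le> n" for i j
    using Xm_props[OF that] comp_idl comp_idr g4[OF that] by auto
  then show ?thesis unfolding nerve_hom_def nerve_id_def
    using Xo_obj id_arr Id_Cp g1 g2 g3 by auto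
qed

lemma max_refl: assumes ri: "reflects_identities C n Xo Xm" and f: "f \<in> HH" "lle ee f" shows "f = ee"
proof (rule eq_e[OF f(1)])
  fix i assume i: "i \<le> n"
  have a: "i \<le> fst f i" "fst f i \<le> n" and t: "snd f i = Comp C (Xm i (fst f i)) (Id C (Xo i))"
    "snd f i \<in> Cp"
    using f i by (auto simp: nerve_le_def nerve_hom_def fst_e snd_e split: prod.splits)
  have xm: "Xm i (fst f i) \<in> Arr C \<and> Dom C (Xm i (fst f i)) = Xo i \<and> Xm i (fst f i) \<in> Cm"
    using Xm_props[OF a] by auto
  then have t2: "snd f i = Xm i (fst f i)" using t comp_idr by auto
  have cp: "Xm i (fst f i) \<in> Cp" using t(2) t2 by simp
  have "Xm i (fst f i) = Id C (Dom C (Xm i (fst f i)))" using xm by (intro cmcp_id cp) simp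
  then have "Xm i (fst f i) = Id C (Xo i)" using xm by simp
  then show fi: "fst f i = i" using ri[unfolded reflects_identities_def, rule_format, of i "fst f i"] a by simp
  show "snd f i = Id C (Xo i)" using t2 fi Xm_id i by simp
qed

lemma not_refl_max: assumes ri: "\<not> reflects_identities C n Xo Xm" shows "\<exists>f\<in>HH. lle ee f \<and> f \<noteq> ee"
proof -
  obtain i j where ij: "i < j" "j \<le> n" "Xm i j = Id C (Xo i)"
    using ri unfolding reflects_identities_def using le_neq_implies_less by blast
  have adj: "Xm i (Suc i) = Id C (Xo i)" by (rule adjacent[OF ij])
  have si: "Suc i \<le> n" using ij by simp
  have xs: "Xo (Suc i) = Xo i" using Xm_props[of i "Suc i"] si adj id_arr[OF Xo_obj[of i]] by auto
  define \<gamma> where "\<gamma> = (\<lambda>k. if k = i then Suc i else k)"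
  have g4: "Xm (\<gamma> a) (\<gamma> b) = Xm a b" if ab: "a \<le> b" "b \<le> n" for a b
  proof -
    consider "a = i" "b = i" | "a = i" "b > i" | "a \<noteq> i" "b = i" | "a \<noteq> i" "b \<noteq> i" using ab(1) le_neq_implies_less by metis
    then show ?thesis
    proof cases
      case 1 then show ?thesis using Xm_id si xs \<gamma>_def by auto
    next
      case 2
      have "Xm a b = Comp C (Xm (Suc i) b) (Xm i (Suc i))" using Xm_comp[of i "Suc i" b] 2 that by simp
      also have "\<dots> = Xm (Suc i) b" using adj comp_idr Xm_props[of "Suc i" b] 2 that xs by auto
      finally show ?thesis using 2 \<gamma>_def by simp
    next
      case 3
      have "Xm a (Suc i) = Comp C (Xm i (Suc i)) (Xm a i)" using Xm_comp[of a i "Suc i"] 3 that si by simp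
      also have "\<dots> = Xm a i" using adj comp_idl Xm_props[of a i] 3 that by auto
      finally show ?thesis using 3 \<gamma>_def by simp
    next
      case 4 then show ?thesis using \<gamma>_def by simp
    qed
  qed
  have inH: "(restrict \<gamma> {..n}, snd ee) \<in> HH"
    by (rule collapse_in_H) (use g4 si xs in \<open>auto simp: \<gamma>_def\<close>)
  have "lle ee (restrict \<gamma> {..n}, snd ee)"
    unfolding nerve_le_def
  proof (intro allI impI conjI)
    fix k assume k: "k \<le> n"
    show "fst ee k \<le> fst (restrict \<gamma> {..n}, snd ee) k" using k fst_e[OF k] by (simp add: \<gamma>_def)
    have xk: "Xm k (\<gamma> k) = Id C (Xo k)" using adj Xm_id[OF k] by (simp add: \<gamma>_def)
    show "snd (restrict \<gamma> {..n}, snd ee) k =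
         Comp C (Xm (fst ee k) (fst (restrict \<gamma> {..n}, snd ee) k)) (snd ee k)"
      using k fst_e[OF k] snd_e[OF k] xk comp_idl[of "Id C (Xo k)" "Xo k"] id_arr[OF Xo_obj[OF k]] by simp
  qed
  moreover have "(restrict \<gamma> {..n}, snd ee) \<noteq> ee"
  proof
    assume "(restrict \<gamma> {..n}, snd ee) = ee"
    then have "fst (restrict \<gamma> {..n}, snd ee) i = fst ee i" by simp
    then show False using fst_e[of i] si by (simp add: \<gamma>_def)
  qed
  ultimately show ?thesis using inH by blast
qed


lemma min_refl: assumes ri: "reflects_identities C n Xo Xm" and f: "f \<in> HH" "lle f ee" shows "f = ee"
proof -
  obtain \<alpha> \<theta> where fe: "f = (\<alpha>, \<theta>)" by (cases f)
  have h1: "\<And>i. i \<le> n \<Longrightarrow> \<alpha> i \<le> n" and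
    h3: "\<And>i. i \<le> n \<Longrightarrow> \<theta> i \<in> Arr C \<and> \<theta> i \<in> Cp \<and> Dom C (\<theta> i) = Xo i \<and> Cod C (\<theta> i) = Xo (\<alpha> i)" and
    h4: "\<And>i j. i \<le> j \<Longrightarrow> j \<le> n \<Longrightarrow> Comp C (Xm (\<alpha> i) (\<alpha> j)) (\<theta> i) = Comp C (\<theta> j) (Xm i j)"
    using f(1) fe unfolding nerve_hom_def by auto
  have l: "\<And>i. i \<le> n \<Longrightarrow> \<alpha> i \<le> i \<and> Id C (Xo i) = Comp C (Xm (\<alpha> i) i) (\<theta> i)"
    using f(2) fe fst_e snd_e unfolding nerve_le_def by auto
  have main: "k \<le> n \<longrightarrow> \<alpha> k = k \<and> \<theta> k = Id C (Xo k)" for k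
  proof (induction k rule: less_induct)
    case (less k)
    show ?case
    proof
      assume k: "k \<le> n"
      let ?a = "\<alpha> k"
      have ak: "?a \<le> k" using l[OF k] by simp
      have "\<not> ?a < k"
      proof
        assume lt: "?a < k"
        have IH: "\<alpha> ?a = ?a" "\<theta> ?a = Id C (Xo ?a)" using less.IH[OF lt] k lt by auto
        have an: "?a \<le> n" using ak k by simp
        have "Comp C (Xm (\<alpha> ?a) (\<alpha> k)) (\<theta> ?a) = Comp C (\<theta> k) (Xm ?a k)" using h4[OF ak k] .
        moreover have "Comp C (Xm (\<alpha> ?a) (\<alpha> k)) (\<theta> ?a) = Id C (Xo ?a)"
          using IH Xm_id[OF an] comp_idl[of "Id C (Xo ?a)" "Xo ?a"] id_arr[OF Xo_obj[OF an]] by simp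
        ultimately have c: "Comp C (\<theta> k) (Xm ?a k) = Id C (Xo ?a)" by simp
        have xm: "Xm ?a k \<in> Arr C \<and> Dom C (Xm ?a k) = Xo ?a \<and> Cod C (Xm ?a k) = Xo k \<and> Xm ?a k \<in> Cm"
          using Xm_props[OF ak k] .
        have tk: "\<theta> k \<in> Cp" "Dom C (\<theta> k) = Xo k" using h3[OF k] by auto
        have "Xm ?a k = Id C (Dom C (Xm ?a k))"
          by (rule retract_id[of _ "\<theta> k"]) (use xm tk c in simp_all)
        then have "Xm ?a k = Id C (Xo ?a)" using xm by simp
        then have "?a = k" using ri[unfolded reflects_identities_def, rule_format, of ?a k] ak k by simp
        then show False using lt by simp
      qed
      then have ak2: "?a = k" using ak by simp
      have "Id C (Xo k) = Comp C (Xm k k) (\<theta> k)" using l[OF k] ak2 by simp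
      also have "\<dots> = \<theta> k" using Xm_id[OF k] comp_idl[of "\<theta> k" "Xo k"] h3[OF k] ak2 by simp
      finally show "\<alpha> k = k \<and> \<theta> k = Id C (Xo k)" using ak2 by simp
    qed
  qed
  show ?thesis by (rule eq_e[OF f(1)]) (use main fe in auto)
qed

lemma not_refl_min: assumes ri: "\<not> reflects_identities C n Xo Xm" shows "\<exists>f\<in>HH. lle f ee \<and> f \<noteq> ee"
proof -
  obtain i j where ij: "i < j" "j \<le> n" "Xm i j = Id C (Xo i)"
    using ri unfolding reflects_identities_def using le_neq_implies_less by blast
  have adj: "Xm i (Suc i) = Id C (Xo i)" by (rule adjacent[OF ij])
  have si: "Suc i \<le> n" using ij by simp
  have xs: "Xo (Suc i) = Xo i" using Xm_props[of i "Suc i"] si adj id_arr[OF Xo_obj[of i]] by auto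
  define \<gamma> where "\<gamma> = (\<lambda>k. if k = Suc i then i else k)"
  have g4: "Xm (\<gamma> a) (\<gamma> b) = Xm a b" if ab: "a \<le> b" "b \<le> n" for a b
  proof -
    consider "a = Suc i" "b = Suc i" | "a = Suc i" "b > Suc i" | "a \<noteq> Suc i" "b = Suc i" | "a \<noteq> Suc i" "b \<noteq> Suc i"
      using ab(1) le_neq_implies_less by metis
    then show ?thesis
    proof cases
      case 1 then show ?thesis using Xm_id si xs \<gamma>_def by auto
    next
      case 2
      have "Xm i b = Comp C (Xm (Suc i) b) (Xm i (Suc i))" using Xm_comp[of i "Suc i" b] 2 ab by simp
      also have "\<dots> = Xm (Suc i) b" using adj comp_idr Xm_props[of "Suc i" b] 2 ab xs by auto
      finally show ?thesis using 2 \<gamma>_def by simp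
    next
      case 3
      have ai: "a \<le> i" using 3 ab by simp
      have "Xm a (Suc i) = Comp C (Xm i (Suc i)) (Xm a i)" using Xm_comp[of a i "Suc i"] ai si by simp
      also have "\<dots> = Xm a i" using adj comp_idl Xm_props[of a i] ai si by auto
      finally show ?thesis using 3 \<gamma>_def by simp
    next
      case 4 then show ?thesis using \<gamma>_def by simp
    qed
  qed
  have inH: "(restrict \<gamma> {..n}, snd ee) \<in> HH"
    by (rule collapse_in_H) (use g4 si xs in \<open>auto simp: \<gamma>_def\<close>)
  have "lle (restrict \<gamma> {..n}, snd ee) ee"
    unfolding nerve_le_def
  proof (intro allI impI conjI)
    fix k assume k: "k \<le> n"
    show "fst (restrict \<gamma> {..n}, snd ee) k \<le> fst ee k" using k fst_e[OF k] by (simp add: \<gamma>_def)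
    have xk: "Xm (\<gamma> k) k = Id C (Xo k)" using adj Xm_id[OF k] xs by (simp add: \<gamma>_def)
    show "snd ee k =
         Comp C (Xm (fst (restrict \<gamma> {..n}, snd ee) k) (fst ee k)) (snd (restrict \<gamma> {..n}, snd ee) k)"
      using k fst_e[OF k] snd_e[OF k] xk comp_idl[of "Id C (Xo k)" "Xo k"] id_arr[OF Xo_obj[OF k]] by simp
  qed
  moreover have "(restrict \<gamma> {..n}, snd ee) \<noteq> ee"
  proof
    assume "(restrict \<gamma> {..n}, snd ee) = ee"
    then have "fst (restrict \<gamma> {..n}, snd ee) (Suc i) = fst ee (Suc i)" by simp
    then show False using fst_e[of "Suc i"] si by (simp add: \<gamma>_def)
  qed
  ultimately show ?thesis using inH by blast
qed

lemma antisym_e: assumes f: "f \<in> HH" "lle ee f" "lle f ee" shows "f = ee"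
proof (rule eq_e[OF f(1)])
  fix i assume i: "i \<le> n"
  have a: "i \<le> fst f i" "fst f i \<le> i" "snd f i = Comp C (Xm i (fst f i)) (Id C (Xo i))"
    using f(2,3) i fst_e[OF i] snd_e[OF i] unfolding nerve_le_def by auto
  then show fi: "fst f i = i" by simp
  show "snd f i = Id C (Xo i)" using a(3) fi Xm_id[OF i] comp_idl[of "Id C (Xo i)" "Xo i"] id_arr[OF Xo_obj[OF i]] by simp
qed

lemma class_refl: assumes ri: "reflects_identities C n Xo Xm" shows "equiv_class_gen HH lle ee = {ee}"
proof -
  let ?R = "{(a, b). a \<in> HH \<and> b \<in> HH \<and> lle a b}"
  have "g = ee" if "(ee, g) \<in> (?R \<union> ?R\<inverse>)\<^sup>*" for g
    using that
  proof (induction rule: rtrancl_induct)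
    case base then show ?case by simp
  next
    case (step y z)
    then have "z \<in> HH" "lle ee z \<or> lle z ee" by auto
    then show ?case using max_refl[OF ri, of z] min_refl[OF ri, of z] by blast
  qed
  then show ?thesis unfolding equiv_class_gen_def Let_def using e_in_H by auto
qed

lemma class_nonrefl: assumes ri: "\<not> reflects_identities C n Xo Xm" shows "\<not> (\<forall>f\<in>equiv_class_gen HH lle ee. lle f ee)"
proof
  assume A: "\<forall>f\<in>equiv_class_gen HH lle ee. lle f ee"
  obtain f where f: "f \<in> HH" "lle ee f" "f \<noteq> ee" using not_refl_max[OF ri] by blast
  have "f \<in> equiv_class_gen HH lle ee" unfolding equiv_class_gen_def Let_def
    using f e_in_H by (auto intro!: r_into_rtrancl)
  then have "lle f ee" using A by blast
  then show False using antisym_e f by blast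
qed

end

theorem lemma5p6:
  fixes C :: "('o, 'm) cat" and Cm Cp :: "'m set"
    and n :: nat and Xo :: "nat \<Rightarrow> 'o" and Xm :: "nat \<Rightarrow> nat \<Rightarrow> 'm"
  assumes "reedy C Cm Cp"
    and "nerve_obj C Cm n Xo Xm"
  defines "H \<equiv> nerve_hom C Cp n Xo Xm n Xo Xm"
    and "e \<equiv> nerve_id C n Xo"
    and "le \<equiv> nerve_le C n Xm"
  shows "(reflects_identities C n Xo Xm \<longleftrightarrow> (\<forall>f\<in>H. le e f \<longrightarrow> f = e))
       \<and> (reflects_identities C n Xo Xm \<longleftrightarrow> (\<forall>f\<in>H. le f e \<longrightarrow> f = e))
       \<and> (reflects_identities C n Xo Xm \<longleftrightarrow> (\<forall>f\<in>equiv_class_gen H le e. le f e))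
       \<and> (reflects_identities C n Xo Xm \<longleftrightarrow> equiv_class_gen H le e = {e})"
proof -
  note A = assms(1,2)
  have c1: "reflects_identities C n Xo Xm \<longleftrightarrow> (\<forall>f\<in>H. le e f \<longrightarrow> f = e)"
    unfolding H_def e_def le_def using max_refl[OF A] not_refl_max[OF A] by blast
  have c2: "reflects_identities C n Xo Xm \<longleftrightarrow> (\<forall>f\<in>H. le f e \<longrightarrow> f = e)"
    unfolding H_def e_def le_def using min_refl[OF A] not_refl_min[OF A] by blast
  have c4: "reflects_identities C n Xo Xm \<longleftrightarrow> equiv_class_gen H le e = {e}"
  proof
    assume "reflects_identities C n Xo Xm"
    then show "equiv_class_gen H le e = {e}" unfolding H_def e_def le_def using class_refl[OF A] by blast
  next
    assume h: "equiv_class_gen H le e = {e}"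
    then have "\<forall>f\<in>equiv_class_gen H le e. le f e" using le_ee[OF A] unfolding le_def e_def by simp
    then show "reflects_identities C n Xo Xm" using class_nonrefl[OF A] unfolding H_def e_def le_def by blast
  qed
  have c3: "reflects_identities C n Xo Xm \<longleftrightarrow> (\<forall>f\<in>equiv_class_gen H le e. le f e)"
    using c4 le_ee[OF A] class_nonrefl[OF A] unfolding H_def e_def le_def by auto
  show ?thesis using c1 c2 c3 c4 by blast
qed

end
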